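(* If $G$ is an optimal digraph and $(u,v)$ is a shortest non-edge of $G$, then $N^+(v) \cap N^-(u) \neq \emptyset$.
   Context: Digraphs are finite, loopless, with at most one edge $uv$ per ordered pair. $N^+(v)=\{u: vu\in E(G)\}$, $N^-(v)=\{u:uv\in E(G)\}$. A digraph is $2$-free if no distinct $u,v$ have both $uv,vu$ as edges. A circular interval digraph is a digraph together with a fixed arrangement of its vertices in a circle such that for all distinct $u,v,w$ in clockwise order with $uw\in E(G)$, also $uv,vw\in E(G)$. For distinct $u,v$, $d(u,v) = 1 + |\{w: u,w,v \text{ distinct, in clockwise order}\}|$; this is the length of the ordered pair $uv$. A non-edge is an ordered pair $(u,v)$ of distinct vertices with neither $uv$ nor $vu$ an edge; its length is $d(u,v)$. $\alpha_G$ is the minimum length of a non-edge ($\infty$ if none); a shortest non-edge is a non-edge of length $\alpha_G$. $\xi(G)$ is the number of pairs $(uv,(w,x))$ with $uv\in E(G)$, $(w,x)$ a non-edge, $d(u,v)>d(w,x)$. $\tilde P_3(G)$ is the number of triples $(a,b,c)$ of distinct vertices with $ab,bc\in E(G)$ and $ac,ca\notin E(G)$. For fixed $n\ge 4$, $G$ is optimal if it is a $2$-free circular interval digraph on $n$ vertices maximizing $\tilde P_3$ among all such digraphs and, subject to this, minimizing $\xi(G)$. *)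

theory Defs
  imports Main
begin

text \<open>Vertices are the positions 0,...,n-1 arranged clockwise in increasing order
  around a circle; a digraph is a relation E on them.\<close>

definition dist_cw :: "nat \<Rightarrow> nat \<Rightarrow> nat \<Rightarrow> nat" where
  "dist_cw n u v = nat ((int v - int u) mod int n)"

definition is_digraph :: "nat \<Rightarrow> (nat \<Rightarrow> nat \<Rightarrow> bool) \<Rightarrow> bool" where
  "is_digraph n E \<longleftrightarrow> (\<forall>u v. E u v \<longrightarrow> u < n \<and> v < n \<and> u \<noteq> v)"

definition two_free :: "nat \<Rightarrow> (nat \<Rightarrow> nat \<Rightarrow> bool) \<Rightarrow> bool" where
  "two_free n E \<longleftrightarrow> (\<forall>u<n. \<forall>v<n. u \<noteq> v \<longrightarrow> \<not> (E u v \<and> E v u))"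

definition cw_order :: "nat \<Rightarrow> nat \<Rightarrow> nat \<Rightarrow> nat \<Rightarrow> bool" where
  "cw_order n u v w \<longleftrightarrow> u < n \<and> v < n \<and> w < n \<and> u \<noteq> v \<and> v \<noteq> w \<and> u \<noteq> w
     \<and> dist_cw n u v < dist_cw n u w"

definition circ_interval :: "nat \<Rightarrow> (nat \<Rightarrow> nat \<Rightarrow> bool) \<Rightarrow> bool" where
  "circ_interval n E \<longleftrightarrow> is_digraph n E \<and>
     (\<forall>u v w. cw_order n u v w \<and> E u w \<longrightarrow> E u v \<and> E v w)"

definition non_edge :: "nat \<Rightarrow> (nat \<Rightarrow> nat \<Rightarrow> bool) \<Rightarrow> nat \<Rightarrow> nat \<Rightarrow> bool" where
  "non_edge n E u v \<longleftrightarrow> u < n \<and> v < n \<and> u \<noteq> v \<and> \<not> E u v \<and> \<not> E v u"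

definition shortest_non_edge :: "nat \<Rightarrow> (nat \<Rightarrow> nat \<Rightarrow> bool) \<Rightarrow> nat \<Rightarrow> nat \<Rightarrow> bool" where
  "shortest_non_edge n E u v \<longleftrightarrow> non_edge n E u v \<and>
     (\<forall>w x. non_edge n E w x \<longrightarrow> dist_cw n u v \<le> dist_cw n w x)"

definition xi :: "nat \<Rightarrow> (nat \<Rightarrow> nat \<Rightarrow> bool) \<Rightarrow> nat" where
  "xi n E = card {((u,v),(w,x)). u < n \<and> v < n \<and> E u v \<and> non_edge n E w x
                   \<and> dist_cw n u v > dist_cw n w x}"

definition P3t :: "nat \<Rightarrow> (nat \<Rightarrow> nat \<Rightarrow> bool) \<Rightarrow> nat" where
  "P3t n E = card {(a,b,c). a < n \<and> b < n \<and> c < n \<and> a \<noteq> b \<and> b \<noteq> c \<and> a \<noteq> c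
                   \<and> E a b \<and> E b c \<and> \<not> E a c \<and> \<not> E c a}"

definition admissible :: "nat \<Rightarrow> (nat \<Rightarrow> nat \<Rightarrow> bool) \<Rightarrow> bool" where
  "admissible n E \<longleftrightarrow> circ_interval n E \<and> two_free n E"

definition optimal :: "nat \<Rightarrow> (nat \<Rightarrow> nat \<Rightarrow> bool) \<Rightarrow> bool" where
  "optimal n E \<longleftrightarrow> admissible n E
     \<and> (\<forall>H. admissible n H \<longrightarrow> P3t n H \<le> P3t n E)
     \<and> (\<forall>H. admissible n H \<and> P3t n H = P3t n E \<longrightarrow> xi n E \<le> xi n H)"

end

theory Submission imports Defs begin

lemma dist_eq: "u < n \<Longrightarrow> v < n \<Longrightarrow> dist_cw n u v = (if u \<le> v then v - u else n + v - u)"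
proof (cases "u \<le> v")
  case True
  assume "u < n" "v < n"
  then have "(int v - int u) mod int n = int v - int u" using True by (intro mod_pos_pos_trivial) auto
  then show ?thesis using True by (simp add: dist_cw_def)
next
  case False
  assume "u < n" "v < n"
  have "(int v - int u) mod int n = (int v - int u + int n) mod int n" by simp
  also have "\<dots> = int v - int u + int n" using False \<open>u<n\<close> \<open>v<n\<close> by (intro mod_pos_pos_trivial) auto
  finally show ?thesis using False by (simp add: dist_cw_def)
qed

lemma cw_iff: "a < n \<Longrightarrow> b < n \<Longrightarrow> c < n \<Longrightarrow> cw_order n a b c \<longleftrightarrow>
  a \<noteq> b \<and> b \<noteq> c \<and> a \<noteq> c \<and> (if a \<le> b then b - a else n + b - a) < (if a \<le> c then c - a else n + c - a)"
  unfolding cw_order_def by (simp add: dist_eq)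

definition addE :: "(nat \<Rightarrow> nat \<Rightarrow> bool) \<Rightarrow> nat \<Rightarrow> nat \<Rightarrow> nat \<Rightarrow> nat \<Rightarrow> bool" where
  "addE E p q a b \<longleftrightarrow> E a b \<or> (a = p \<and> b = q)"

abbreviation P3set :: "nat \<Rightarrow> (nat \<Rightarrow> nat \<Rightarrow> bool) \<Rightarrow> (nat \<times> nat \<times> nat) set" where
  "P3set n E \<equiv> {(a,b,c). a < n \<and> b < n \<and> c < n \<and> a \<noteq> b \<and> b \<noteq> c \<and> a \<noteq> c
                   \<and> E a b \<and> E b c \<and> \<not> E a c \<and> \<not> E c a}"

lemma P3set_fin: "finite (P3set n E)"
  by (rule finite_subset[of _ "{0..<n} \<times> {0..<n} \<times> {0..<n}"]) auto

lemma count_lemma: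
  fixes SE SH L G :: "'a set"
  assumes "finite SH" "SE - SH \<subseteq> L" "G \<subseteq> SH" "G \<inter> SE = {}" "finite L" "card L < card G"
  shows "card SE < card SH"
proof -
  have fG: "finite G" using assms(1,3) finite_subset by blast
  have "SE \<subseteq> (SH - G) \<union> L" using assms(2,4) by blast
  then have "card SE \<le> card ((SH - G) \<union> L)" using assms by (intro card_mono) auto
  also have "\<dots> \<le> card (SH - G) + card L" by (rule card_Un_le)
  also have "card (SH - G) = card SH - card G" using assms(3) fG by (simp add: card_Diff_subset)
  finally show ?thesis using assms(6) card_mono[OF assms(1,3)] by linarith
qed

context
  fixes n :: nat and E :: "nat \<Rightarrow> nat \<Rightarrow> bool" and u v :: nat
  assumes n4: "n \<ge> 4" and adm: "admissible n E" and sh: "shortest_non_edge n E u v"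
    and noW: "\<not> (\<exists>w<n. E v w \<and> E w u)"
begin

lemma dig: "E a b \<Longrightarrow> a < n \<and> b < n \<and> a \<noteq> b"
  using adm unfolding admissible_def circ_interval_def is_digraph_def by blast

lemma circ: "cw_order n a b c \<Longrightarrow> E a c \<Longrightarrow> E a b \<and> E b c"
  using adm unfolding admissible_def circ_interval_def by blast

lemma tf: "E a b \<Longrightarrow> \<not> E b a"
  using adm dig unfolding admissible_def two_free_def by blast

lemma uv: "u < n" "v < n" "u \<noteq> v" "\<not> E u v" "\<not> E v u"
  using sh unfolding shortest_non_edge_def non_edge_def by auto

lemma short: "w < n \<Longrightarrow> x < n \<Longrightarrow> w \<noteq> x \<Longrightarrow> \<not> E w x \<Longrightarrow> \<not> E x w \<Longrightarrow> dist_cw n u v \<le> dist_cw n w x"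
  using sh unfolding shortest_non_edge_def non_edge_def by auto

lemma noW': "E v w \<Longrightarrow> \<not> E w u"
  using noW dig by blast

lemma alpha2: "2 * dist_cw n u v \<le> n"
proof -
  have "dist_cw n u v \<le> dist_cw n v u" using short[of v u] uv by auto
  then show ?thesis using uv by (auto simp: dist_eq split: if_splits)
qed

lemma alpha1: "dist_cw n u v \<ge> 1"
  using uv by (auto simp: dist_eq)

lemma adj: "a < n \<Longrightarrow> b < n \<Longrightarrow> a \<noteq> b \<Longrightarrow> dist_cw n a b < dist_cw n u v \<Longrightarrow> E a b \<or> E b a"
  using short[of a b] by force

lemma uout: "E u b \<Longrightarrow> b < n \<and> b \<noteq> u \<and> dist_cw n u b < dist_cw n u v"
proof -
  assume e: "E u b"
  have b: "b < n" "b \<noteq> u" "b \<noteq> v" using dig[OF e] uv e by auto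
  show ?thesis
  proof (rule ccontr)
    assume "\<not> ?thesis"
    then have "cw_order n u v b" using b uv by (auto simp: cw_iff dist_eq split: if_splits)
    then show False using circ e uv by blast
  qed
qed

lemma H_adm: "admissible n (addE E u v)"
  unfolding admissible_def circ_interval_def is_digraph_def two_free_def
proof (intro conjI)
  show "\<forall>a b. addE E u v a b \<longrightarrow> a < n \<and> b < n \<and> a \<noteq> b" using dig uv unfolding addE_def by auto
next
  show "\<forall>a<n. \<forall>b<n. a \<noteq> b \<longrightarrow> \<not> (addE E u v a b \<and> addE E u v b a)" using tf uv unfolding addE_def by blast
next
  show "\<forall>a b c. cw_order n a b c \<and> addE E u v a c \<longrightarrow> addE E u v a b \<and> addE E u v b c"
  proof (intro allI impI)
  fix a b c assume asm: "cw_order n a b c \<and> addE E u v a c"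
  then have abc: "a < n" "b < n" "c < n" unfolding cw_order_def by auto
  show "addE E u v a b \<and> addE E u v b c"
  proof (cases "E a c")
    case True
    then show ?thesis using circ asm unfolding addE_def by blast
  next
    case False
    then have ac: "a = u" "c = v" using asm unfolding addE_def by auto
    have o: "cw_order n u b v" using asm ac by simp
    have d1: "dist_cw n u b < dist_cw n u v" using o unfolding cw_order_def by auto
    have d2: "dist_cw n b v < dist_cw n u v" using o uv abc by (auto simp: cw_iff dist_eq split: if_splits)
    have "E u b"
    proof -
      have "E u b \<or> E b u" using adj[OF uv(1) abc(2) _ d1] o unfolding cw_order_def by auto
      moreover have "\<not> E b u"
      proof
        assume "E b u"
        have "cw_order n b v u" using o uv abc by (auto simp: cw_iff split: if_splits)
        then show False using circ \<open>E b u\<close> uv by blast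
      qed
      ultimately show ?thesis by blast
    qed
    moreover have "E b v"
    proof -
      have "E b v \<or> E v b" using adj[OF abc(2) uv(2) _ d2] o unfolding cw_order_def by auto
      moreover have "\<not> E v b"
      proof
        assume "E v b"
        have "cw_order n v u b" using o uv abc by (auto simp: cw_iff split: if_splits)
        then show False using circ \<open>E v b\<close> uv by blast
      qed
      ultimately show ?thesis by blast
    qed
    ultimately show ?thesis using ac unfolding addE_def by auto
  qed
  qed
qed

definition I :: "nat set" where "I = {b. b < n \<and> b \<noteq> u \<and> dist_cw n u b < dist_cw n u v}"

lemma loss: "P3set n E - P3set n (addE E u v) \<subseteq> (\<lambda>b. (u,b,v)) ` I"
proof
  fix t assume t: "t \<in> P3set n E - P3set n (addE E u v)"
  obtain a b c where abc: "t = (a,b,c)" by (cases t) auto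
  have e: "E a b" "E b c" using t abc by auto
  have "addE E u v a c \<or> addE E u v c a" using t abc unfolding addE_def by auto
  then have "(a = u \<and> c = v) \<or> (a = v \<and> c = u)" using t abc unfolding addE_def by auto
  moreover have "\<not> (a = v \<and> c = u)" using e noW' by blast
  ultimately have "a = u" "c = v" by auto
  then show "t \<in> (\<lambda>b. (u,b,v)) ` I" using uout[of b] e abc unfolding I_def by auto
qed

definition r :: "nat \<Rightarrow> nat" where "r b = nat ((2 * int u - int b) mod int n)"

lemma r_lt: "r b < n"
  using n4 unfolding r_def by (simp add: nat_less_iff)

lemma r_int: "int (r b) = (2 * int u - int b) mod int n"
  using n4 unfolding r_def by simp

lemma r_dist: "b < n \<Longrightarrow> dist_cw n (r b) u = dist_cw n u b"
proof -
  have "(int u - int (r b)) mod int n = (int u - (2 * int u - int b)) mod int n"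
    unfolding r_int by (rule mod_diff_right_eq)
  also have "\<dots> = (int b - int u) mod int n" by (simp add: algebra_simps)
  finally show ?thesis unfolding dist_cw_def by simp
qed

lemma r_inv: "b < n \<Longrightarrow> r (r b) = b"
proof -
  assume b: "b < n"
  have "int (r (r b)) = (2 * int u - int (r b)) mod int n" by (rule r_int)
  also have "\<dots> = (2 * int u - (2 * int u - int b)) mod int n" unfolding r_int by (rule mod_diff_right_eq)
  also have "\<dots> = int b" using b by simp
  finally show ?thesis by simp
qed

lemma r_inj: "inj_on r {..<n}"
  by (metis inj_on_inverseI lessThan_iff r_inv)

lemma G1_sub: "(\<lambda>b. (r b, u, v)) ` I \<subseteq> P3set n (addE E u v)"
proof
  fix t assume "t \<in> (\<lambda>b. (r b, u, v)) ` I"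
  then obtain b where b: "b \<in> I" "t = (r b, u, v)" by auto
  define a where "a = r b"
  have bI: "b < n" "b \<noteq> u" "dist_cw n u b < dist_cw n u v" using b unfolding I_def by auto
  have da: "dist_cw n a u < dist_cw n u v" using r_dist bI unfolding a_def by simp
  have an: "a < n" unfolding a_def by (rule r_lt)
  have au: "a \<noteq> u"
  proof
    assume "a = u"
    then have "dist_cw n u b = 0" using r_dist[OF bI(1)] unfolding a_def using uv by (simp add: dist_eq)
    then show False using bI uv by (auto simp: dist_eq split: if_splits)
  qed
  have al: "2 * dist_cw n u v \<le> n" by (rule alpha2)
  have av: "a \<noteq> v" using da al uv by (auto simp: dist_eq split: if_splits)
  have "E a u \<or> E u a" using adj[OF an uv(1) au da] .
  moreover have "\<not> E u a"
  proof
    assume "E u a"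
    from uout[OF this] have "dist_cw n u a < dist_cw n u v" by simp
    then show False using da al an uv au by (auto simp: dist_eq split: if_splits)
  qed
  ultimately have eau: "E a u" by blast
  have "\<not> E a v"
  proof
    assume "E a v"
    have "cw_order n a u v" using da al an uv au av by (auto simp: cw_iff dist_eq split: if_splits)
    then show False using circ \<open>E a v\<close> uv by blast
  qed
  moreover have "\<not> E v a" using noW' eau by blast
  ultimately show "t \<in> P3set n (addE E u v)" using b(2) eau an au av uv unfolding a_def[symmetric] addE_def
    by auto
qed

lemma card_G1: "card ((\<lambda>b. (r b, u, v)) ` I) = card I"
proof (rule card_image)
  show "inj_on (\<lambda>b. (r b, u, v)) I"
    using r_inj unfolding I_def inj_on_def by auto
qed

lemma I_fin: "finite I" unfolding I_def by auto

definition x :: nat where "x = (if Suc v < n then Suc v else 0)"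

lemma x_facts: "x < n" "x \<noteq> v" "x \<noteq> u"
proof -
  show "x < n" "x \<noteq> v" using n4 uv unfolding x_def by auto
  show "x \<noteq> u" using n4 uv alpha2 unfolding x_def by (auto simp: dist_eq split: if_splits)
qed

lemma cw_vx: "c < n \<Longrightarrow> c \<noteq> v \<Longrightarrow> c \<noteq> x \<Longrightarrow> cw_order n v x c"
  using uv x_facts unfolding x_def by (auto simp: cw_iff split: if_splits)

lemma not_ux: "\<not> E u x"
proof
  assume "E u x"
  from uout[OF this] have "dist_cw n u x < dist_cw n u v" by simp
  then show False using uv x_facts alpha2 n4 unfolding x_def by (auto simp: dist_eq split: if_splits)
qed

lemma case1: "E v x \<Longrightarrow> card (P3set n E) < card (P3set n (addE E u v))"
proof -
  assume evx: "E v x"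
  let ?G = "insert (u,v,x) ((\<lambda>b. (r b, u, v)) ` I)"
  have g: "(u,v,x) \<in> P3set n (addE E u v)"
    using uv x_facts evx not_ux noW' evx unfolding addE_def by auto
  have nin: "(u,v,x) \<notin> (\<lambda>b. (r b, u, v)) ` I" using uv by auto
  have "card ((\<lambda>b. (u,b,v)) ` I) \<le> card I" by (rule card_image_le[OF I_fin])
  also have "\<dots> < card ?G" using card_G1 nin I_fin by simp
  finally have c: "card ((\<lambda>b. (u,b,v)) ` I) < card ?G" .
  show ?thesis
  proof (rule count_lemma[OF P3set_fin loss _ _ _ c])
    show "?G \<subseteq> P3set n (addE E u v)" using g G1_sub by blast
    show "?G \<inter> P3set n E = {}" using uv by auto
    show "finite ((\<lambda>b. (u,b,v)) ` I)" using I_fin by simp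
  qed
qed

lemma case2_alpha: "\<not> E v x \<Longrightarrow> dist_cw n u v = 1"
proof (rule ccontr)
  assume nvx: "\<not> E v x" and ne: "dist_cw n u v \<noteq> 1"
  have a2: "dist_cw n u v \<ge> 2" using ne alpha1 by simp
  have "dist_cw n v x < dist_cw n u v" using a2 uv x_facts unfolding x_def by (auto simp: dist_eq)
  then have "E v x \<or> E x v" using adj[OF uv(2) x_facts(1)] x_facts by auto
  then have "E x v" using nvx by blast
  moreover have "cw_order n x u v" using uv x_facts unfolding x_def by (auto simp: cw_iff split: if_splits)
  ultimately show False using circ uv by blast
qed

lemma I_empty: "dist_cw n u v = 1 \<Longrightarrow> I = {}"
  unfolding I_def using uv by (auto simp: dist_eq split: if_splits)

lemma case2a: "\<not> E v x \<Longrightarrow> E a u \<Longrightarrow> card (P3set n E) < card (P3set n (addE E u v))"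
proof -
  assume nvx: "\<not> E v x" and eau: "E a u"
  have a: "a < n" "a \<noteq> u" "a \<noteq> v" using dig[OF eau] eau uv by auto
  have "\<not> cw_order n a v u" using circ eau uv by blast
  then have "cw_order n a u v" using a uv by (auto simp: cw_iff split: if_splits)
  then have "\<not> E a v" using circ uv by blast
  moreover have "\<not> E v a" using noW' eau by blast
  ultimately have g: "(a,u,v) \<in> P3set n (addE E u v)" using a uv eau unfolding addE_def by auto
  have L: "P3set n E - P3set n (addE E u v) \<subseteq> {}" using loss I_empty[OF case2_alpha[OF nvx]] by simp
  show ?thesis
    by (rule count_lemma[OF P3set_fin L, of "{(a,u,v)}"]) (use g uv in auto)
qed

lemma case2b: "\<not> E v x \<Longrightarrow> (\<forall>a. \<not> E a u) \<Longrightarrow> admissible n (addE (addE E u v) v x) \<and>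
   card (P3set n E) < card (P3set n (addE (addE E u v) v x))"
proof -
  assume nvx: "\<not> E v x" and nin: "\<forall>a. \<not> E a u"
  have al: "dist_cw n u v = 1" by (rule case2_alpha[OF nvx])
  have uo: "\<And>b. \<not> E u b" using uout al uv by (fastforce simp: dist_eq split: if_splits)
  have vo: "\<And>c. \<not> E v c"
  proof
    fix c assume "E v c"
    then have c: "c < n" "c \<noteq> v" using dig by auto
    show False
    proof (cases "c = x")
      case True then show False using nvx \<open>E v c\<close> by simp
    next
      case False then show False using cw_vx[OF c False] circ \<open>E v c\<close> nvx by blast
    qed
  qed
  have vi: "\<And>a. \<not> E a v"
  proof
    fix a assume "E a v"
    then have a: "a < n" "a \<noteq> v" "a \<noteq> u" using dig uo by auto
    have "cw_order n a u v" using a uv al by (auto simp: cw_iff dist_eq split: if_splits)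
    then show False using circ \<open>E a v\<close> nin by blast
  qed
  have xf: "x < n" "x \<noteq> v" "x \<noteq> u" by (rule x_facts)+
  have dvx: "dist_cw n v x = 1" using uv x_facts unfolding x_def by (auto simp: dist_eq)
  let ?H = "addE (addE E u v) v x"
  have adm2: "admissible n ?H"
    unfolding admissible_def circ_interval_def is_digraph_def two_free_def
  proof (intro conjI)
    show "\<forall>a b. ?H a b \<longrightarrow> a < n \<and> b < n \<and> a \<noteq> b" using dig uv xf unfolding addE_def by auto
  next
    show "\<forall>a<n. \<forall>b<n. a \<noteq> b \<longrightarrow> \<not> (?H a b \<and> ?H b a)" using tf uo vo vi nin xf unfolding addE_def by blast
  next
    show "\<forall>a b c. cw_order n a b c \<and> ?H a c \<longrightarrow> ?H a b \<and> ?H b c"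
    proof (intro allI impI)
      fix a b c assume asm: "cw_order n a b c \<and> ?H a c"
      show "?H a b \<and> ?H b c"
      proof (cases "E a c")
        case True then show ?thesis using circ asm unfolding addE_def by blast
      next
        case False
        then have "(a = u \<and> c = v) \<or> (a = v \<and> c = x)" using asm unfolding addE_def by auto
        moreover have "dist_cw n a b \<ge> 1" using asm unfolding cw_order_def by (auto simp: dist_eq split: if_splits)
        ultimately show ?thesis using asm al dvx unfolding cw_order_def by auto
      qed
    qed
  qed
  have sub: "P3set n E - P3set n ?H \<subseteq> {}"
    using uo vo vi nin unfolding addE_def by auto
  have g: "(u,v,x) \<in> P3set n ?H" using uv xf uo nin unfolding addE_def by auto
  have "card (P3set n E) < card (P3set n ?H)"
    by (rule count_lemma[OF P3set_fin sub, of "{(u,v,x)}"]) (use g uv in auto)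
  then show ?thesis using adm2 by blast
qed

end

theorem mainTheorem7:
  fixes n :: nat and E :: "nat \<Rightarrow> nat \<Rightarrow> bool" and u v :: nat
  assumes "n \<ge> 4"
    and "optimal n E"
    and "shortest_non_edge n E u v"
  shows "\<exists>w<n. E v w \<and> E w u"
proof (rule ccontr)
  assume nw: "\<not> (\<exists>w<n. E v w \<and> E w u)"
  have adm: "admissible n E" and mx: "\<And>H. admissible n H \<Longrightarrow> P3t n H \<le> P3t n E"
    using assms(2) unfolding optimal_def by auto
  note hyps = assms(1) adm assms(3) nw
  have P: "\<And>H. P3t n H = card (P3set n H)" unfolding P3t_def by simp
  show False
  proof (cases "E v (x n v)")
    case True
    from case1[OF hyps True] mx[OF H_adm[OF hyps]] show False unfolding P by simp
  next
    case False
    show False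
    proof (cases "\<exists>a. E a u")
      case True
      then obtain a where "E a u" by blast
      from case2a[OF hyps False this] mx[OF H_adm[OF hyps]] show False unfolding P by simp
    next
      case nn: False
      from case2b[OF hyps False] nn mx show False unfolding P by fastforce
    qed
  qed
qed

end
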